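(* Let $G$ be a very well-covered graph. Then for every local maximum stable set $S\in\Psi(G)$, the induced subgraph $G[N[S]]$ is a König–Egerváry graph.
   Context: All graphs are finite, simple, undirected. For $A\subseteq V(G)$, $N(A)=\{v\in V(G)-A: N(v)\cap A\neq\emptyset\}$ and $N[A]=A\cup N(A)$; $G[X]$ is the subgraph induced by $X$. A stable set is a set of pairwise non-adjacent vertices; $\alpha(G)$ is the maximum size of a stable set, and $\mu(G)$ the maximum size of a matching. $G$ is a König–Egerváry graph if $\alpha(G)+\mu(G)=|V(G)|$. $G$ is well-covered if all its maximal stable sets have the same cardinality, and very well-covered if it is well-covered, has no isolated vertices, and $|V(G)|=2\alpha(G)$. A set $A\subseteq V(G)$ is a local maximum stable set of $G$ if $A$ is a maximum stable set of $G[N[A]]$; $\Psi(G)$ denotes the family of all local maximum stable sets of $G$. *)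

theory Defs
  imports Main
begin

definition simple_graph :: "'a set \<Rightarrow> 'a set set \<Rightarrow> bool" where
  "simple_graph V E \<longleftrightarrow> finite V \<and> (\<forall>e\<in>E. e \<subseteq> V \<and> card e = 2)"

definition adj :: "'a set set \<Rightarrow> 'a \<Rightarrow> 'a \<Rightarrow> bool" where
  "adj E u v \<longleftrightarrow> {u, v} \<in> E"

definition nbhd :: "'a set \<Rightarrow> 'a set set \<Rightarrow> 'a \<Rightarrow> 'a set" where
  "nbhd V E v = {u\<in>V. adj E v u}"

definition open_nbhd_set :: "'a set \<Rightarrow> 'a set set \<Rightarrow> 'a set \<Rightarrow> 'a set" where
  "open_nbhd_set V E A = {v \<in> V - A. nbhd V E v \<inter> A \<noteq> {}}"

definition closed_nbhd_set :: "'a set \<Rightarrow> 'a set set \<Rightarrow> 'a set \<Rightarrow> 'a set" where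
  "closed_nbhd_set V E A = A \<union> open_nbhd_set V E A"

definition induced_edges :: "'a set set \<Rightarrow> 'a set \<Rightarrow> 'a set set" where
  "induced_edges E X = {e \<in> E. e \<subseteq> X}"

definition stable_set :: "'a set \<Rightarrow> 'a set set \<Rightarrow> 'a set \<Rightarrow> bool" where
  "stable_set V E S \<longleftrightarrow> S \<subseteq> V \<and> (\<forall>u\<in>S. \<forall>v\<in>S. \<not> adj E u v)"

definition max_stable_set :: "'a set \<Rightarrow> 'a set set \<Rightarrow> 'a set \<Rightarrow> bool" where
  "max_stable_set V E S \<longleftrightarrow> stable_set V E S \<and>
     (\<forall>T. stable_set V E T \<longrightarrow> card T \<le> card S)"

definition maximal_stable_set :: "'a set \<Rightarrow> 'a set set \<Rightarrow> 'a set \<Rightarrow> bool" where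
  "maximal_stable_set V E S \<longleftrightarrow> stable_set V E S \<and>
     (\<forall>T. stable_set V E T \<and> S \<subseteq> T \<longrightarrow> T = S)"

definition alpha :: "'a set \<Rightarrow> 'a set set \<Rightarrow> nat" where
  "alpha V E = Max (card ` {S. stable_set V E S})"

definition matching :: "'a set set \<Rightarrow> 'a set set \<Rightarrow> bool" where
  "matching E M \<longleftrightarrow> M \<subseteq> E \<and> (\<forall>e1\<in>M. \<forall>e2\<in>M. e1 \<noteq> e2 \<longrightarrow> e1 \<inter> e2 = {})"

definition mu :: "'a set set \<Rightarrow> nat" where
  "mu E = Max (card ` {M. matching E M})"

definition koenig_egervary :: "'a set \<Rightarrow> 'a set set \<Rightarrow> bool" where
  "koenig_egervary V E \<longleftrightarrow> alpha V E + mu E = card V"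

definition well_covered :: "'a set \<Rightarrow> 'a set set \<Rightarrow> bool" where
  "well_covered V E \<longleftrightarrow>
     (\<forall>S T. maximal_stable_set V E S \<and> maximal_stable_set V E T \<longrightarrow> card S = card T)"

definition very_well_covered :: "'a set \<Rightarrow> 'a set set \<Rightarrow> bool" where
  "very_well_covered V E \<longleftrightarrow> well_covered V E \<and>
     (\<forall>v\<in>V. nbhd V E v \<noteq> {}) \<and> card V = 2 * alpha V E"

definition local_max_stable :: "'a set \<Rightarrow> 'a set set \<Rightarrow> 'a set \<Rightarrow> bool" where
  "local_max_stable V E A \<longleftrightarrow> A \<subseteq> V \<and>
     max_stable_set (closed_nbhd_set V E A)
       (induced_edges E (closed_nbhd_set V E A)) A"

definition Psi :: "'a set \<Rightarrow> 'a set set \<Rightarrow> 'a set set" where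
  "Psi V E = {A. local_max_stable V E A}"

end

theory Submission
  imports Defs
begin


lemma hall:
  assumes "finite X" "\<forall>a\<in>X. finite (R a)" "\<forall>A\<subseteq>X. card A \<le> card (\<Union>(R ` A))"
  shows "\<exists>f. inj_on f X \<and> (\<forall>a\<in>X. f a \<in> R a)"
  using assms
proof (induction "card X" arbitrary: X R rule: less_induct)
  case less
  show ?case
  proof (cases "X = {}")
    case True then show ?thesis by auto
  next
    case Xne: False
    show ?thesis
    proof (cases "\<exists>A. A \<noteq> {} \<and> A \<subset> X \<and> card (\<Union>(R ` A)) \<le> card A")
      case True
      then obtain A where A: "A \<noteq> {}" "A \<subset> X" "card (\<Union>(R ` A)) \<le> card A" by blast
      have fA: "finite A" using A(2) less.prems(1) finite_subset by blast
      have "card A \<le> card (\<Union>(R ` A))" using less.prems(3) A(2) by blast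
      hence hA: "card (\<Union>(R ` A)) = card A" using A(3) by simp
      have "card A < card X" using A(2) less.prems(1) psubset_card_mono by blast
      moreover have "\<forall>a\<in>A. finite (R a)" using A(2) less.prems(2) by blast
      moreover have "\<forall>B\<subseteq>A. card B \<le> card (\<Union>(R ` B))" using A(2) less.prems(3) by auto
      ultimately obtain f1 where f1: "inj_on f1 A" "\<forall>a\<in>A. f1 a \<in> R a"
        using less.hyps fA by blast
      define U where "U = \<Union>(R ` A)"
      define R2 where "R2 = (\<lambda>a. R a - U)"
      have fU: "finite U" unfolding U_def using fA \<open>\<forall>a\<in>A. finite (R a)\<close> by blast
      have hall2: "\<forall>B\<subseteq>X-A. card B \<le> card (\<Union>(R2 ` B))"
      proof (intro allI impI)
        fix B assume B: "B \<subseteq> X - A"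
        have fB: "finite B" using B less.prems(1) finite_subset by blast
        have eq: "\<Union>(R ` (B \<union> A)) = \<Union>(R2 ` B) \<union> U" unfolding R2_def U_def by auto
        have f2: "finite (\<Union>(R2 ` B))" unfolding R2_def using fB B less.prems(2) by blast
        have disj: "\<Union>(R2 ` B) \<inter> U = {}" unfolding R2_def by auto
        have "B \<union> A \<subseteq> X" using B A(2) by auto
        hence "card (B \<union> A) \<le> card (\<Union>(R ` (B \<union> A)))"
          using less.prems(3) by blast
        also have "\<dots> = card (\<Union>(R2 ` B)) + card U"
          using eq card_Un_disjoint[OF f2 fU disj] by simp
        finally have "card (B \<union> A) \<le> card (\<Union>(R2 ` B)) + card A" using hA U_def by simp
        moreover have "card (B \<union> A) = card B + card A"
          using card_Un_disjoint[OF fB fA] B by auto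
        ultimately show "card B \<le> card (\<Union>(R2 ` B))" by simp
      qed
      have "X - A \<subset> X" using A(1,2) by blast
      hence "card (X - A) < card X"
        using less.prems(1) psubset_card_mono by blast
      moreover have "finite (X - A)" using less.prems(1) by simp
      moreover have "\<forall>a\<in>X-A. finite (R2 a)" unfolding R2_def using less.prems(2) by simp
      ultimately obtain f2 where f2: "inj_on f2 (X - A)" "\<forall>a\<in>X-A. f2 a \<in> R2 a"
        using less.hyps hall2 by blast
      define f where "f = (\<lambda>a. if a \<in> A then f1 a else f2 a)"
      have "inj_on f X"
      proof (rule inj_onI)
        fix a b assume ab: "a \<in> X" "b \<in> X" "f a = f b"
        show "a = b"
        proof (cases "a \<in> A"; cases "b \<in> A")
          assume "a \<in> A" "b \<in> A" then show ?thesis using ab f1 unfolding f_def by (auto dest: inj_onD)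
        next
          assume "a \<in> A" "b \<notin> A"
          then have "f a \<in> U" "f b \<notin> U" using f1 f2 ab unfolding f_def U_def R2_def by auto
          then show ?thesis using ab by simp
        next
          assume h: "a \<notin> A" "b \<in> A"
          have "f b \<in> U" using h f1 unfolding f_def U_def by auto
          moreover have "f a \<notin> U" using h ab(1) f2 unfolding f_def R2_def by auto
          ultimately show ?thesis using ab by simp
        next
          assume "a \<notin> A" "b \<notin> A" then show ?thesis using ab f2 unfolding f_def by (auto dest: inj_onD)
        qed
      qed
      moreover have "\<forall>a\<in>X. f a \<in> R a" using f1 f2 unfolding f_def R2_def by auto
      ultimately show ?thesis by blast
    next
      case False
      hence strict: "\<And>A. A \<noteq> {} \<Longrightarrow> A \<subset> X \<Longrightarrow> card A < card (\<Union>(R ` A))"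
        by (meson not_le)
      obtain x where x: "x \<in> X" using Xne by blast
      have "card {x} \<le> card (\<Union>(R ` {x}))" using less.prems(3) x by blast
      hence "R x \<noteq> {}" by auto
      then obtain y where y: "y \<in> R x" by blast
      define R2 where "R2 = (\<lambda>a. R a - {y})"
      have hall2: "\<forall>B\<subseteq>X-{x}. card B \<le> card (\<Union>(R2 ` B))"
      proof (intro allI impI)
        fix B assume B: "B \<subseteq> X - {x}"
        show "card B \<le> card (\<Union>(R2 ` B))"
        proof (cases "B = {}")
          case True then show ?thesis by simp
        next
          case False
          have fB: "finite B" using B less.prems(1) finite_subset by blast
          have fU: "finite (\<Union>(R ` B))" using fB B less.prems(2) by blast
          have "B \<subset> X" using B x by blast
          hence lt: "card B < card (\<Union>(R ` B))" using strict False by blast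
          have eq: "\<Union>(R2 ` B) = \<Union>(R ` B) - {y}" unfolding R2_def by auto
          have "card (\<Union>(R ` B)) \<le> card (\<Union>(R ` B) - {y}) + 1"
            using fU by (cases "y \<in> \<Union>(R ` B)") (auto simp: card_Diff_singleton)
          then show ?thesis using lt eq by simp
        qed
      qed
      have "card (X - {x}) < card X" using less.prems(1) x by (rule card_Diff1_less)
      moreover have "finite (X - {x})" using less.prems(1) by simp
      moreover have "\<forall>a\<in>X-{x}. finite (R2 a)" unfolding R2_def using less.prems(2) by simp
      ultimately obtain f2 where f2: "inj_on f2 (X - {x})" "\<forall>a\<in>X-{x}. f2 a \<in> R2 a"
        using less.hyps hall2 by blast
      define f where "f = f2(x := y)"
      have "inj_on f X"
      proof -
        have "inj_on f (X - {x})" unfolding f_def using f2(1) by (simp add: inj_on_def)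
        moreover have "f x \<notin> f ` (X - {x})" unfolding f_def using f2(2) R2_def by auto
        ultimately have "inj_on f (insert x (X - {x}))" by (subst inj_on_insert) simp
        thus ?thesis using insert_Diff[OF x] by simp
      qed
      moreover have "\<forall>a\<in>X. f a \<in> R a" using f2 y unfolding f_def R2_def by auto
      ultimately show ?thesis by blast
    qed
  qed
qed



lemma sg_finite: "simple_graph V E \<Longrightarrow> finite V"
  by (simp add: simple_graph_def)

lemma adj_sym: "adj E u v = adj E v u"
  by (simp add: adj_def insert_commute)

lemma adjD:
  assumes "simple_graph V E" "adj E u v"
  shows "u \<in> V" "v \<in> V" "u \<noteq> v"
proof -
  have e: "{u,v} \<in> E" using assms(2) by (simp add: adj_def)
  hence "{u,v} \<subseteq> V" "card {u,v} = 2" using assms(1) by (auto simp: simple_graph_def)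
  thus "u \<in> V" "v \<in> V" "u \<noteq> v" by auto
qed

lemma stable_fin: "simple_graph V E \<Longrightarrow> finite {S. stable_set V E S}"
proof -
  assume "simple_graph V E"
  hence "finite (Pow V)" by (simp add: sg_finite)
  moreover have "{S. stable_set V E S} \<subseteq> Pow V" by (auto simp: stable_set_def)
  ultimately show ?thesis by (rule finite_subset[rotated])
qed

lemma stable_le_alpha:
  assumes "simple_graph V E" "stable_set V E S"
  shows "card S \<le> alpha V E"
  unfolding alpha_def using assms stable_fin by (intro Max_ge) auto

lemma ex_max_stable:
  assumes "simple_graph V E"
  shows "\<exists>S. stable_set V E S \<and> card S = alpha V E"
proof -
  have "stable_set V E {}" by (simp add: stable_set_def)
  hence "alpha V E \<in> card ` {S. stable_set V E S}"
    unfolding alpha_def using stable_fin[OF assms] by (intro Max_in) auto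
  thus ?thesis by auto
qed

lemma stable_subset: "stable_set V E T \<Longrightarrow> S \<subseteq> T \<Longrightarrow> stable_set V E S"
  by (auto simp: stable_set_def)

lemma ex_maximal:
  assumes "simple_graph V E" "stable_set V E Y"
  shows "\<exists>T. maximal_stable_set V E T \<and> Y \<subseteq> T"
proof -
  define F where "F = {T. stable_set V E T \<and> Y \<subseteq> T}"
  have sub: "F \<subseteq> {S. stable_set V E S}" unfolding F_def by blast
  have fin: "finite F" using finite_subset[OF sub stable_fin[OF assms(1)]] .
  have "Y \<in> F" using assms(2) unfolding F_def by blast
  hence ne: "F \<noteq> {}" by blast
  from finite_has_maximal[OF fin ne] obtain T where T: "T \<in> F" "\<forall>x\<in>F. T \<le> x \<longrightarrow> T = x" ..
  have st: "stable_set V E T" "Y \<subseteq> T" using T(1) unfolding F_def by blast+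
  have "maximal_stable_set V E T"
    unfolding maximal_stable_set_def
  proof (intro conjI allI impI)
    show "stable_set V E T" by (fact st)
    fix T' assume h: "stable_set V E T' \<and> T \<subseteq> T'"
    hence "T' \<in> F" using st(2) unfolding F_def by blast
    thus "T' = T" using T(2)[rule_format, OF \<open>T' \<in> F\<close>] h by simp
  qed
  thus ?thesis using st(2) by blast
qed

lemma max_card_maximal:
  assumes "simple_graph V E" "stable_set V E S" "card S = alpha V E"
  shows "maximal_stable_set V E S"
  unfolding maximal_stable_set_def
proof (intro conjI allI impI)
  show "stable_set V E S" by fact
  fix T assume T: "stable_set V E T \<and> S \<subseteq> T"
  have "T \<subseteq> V" using T by (simp add: stable_set_def)
  hence "finite T" using sg_finite[OF assms(1)] by (rule finite_subset)
  moreover have "card T \<le> card S" using stable_le_alpha[OF assms(1)] T assms(3) by auto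
  ultimately have "S = T" using T by (intro card_seteq) auto
  thus "T = S" by simp
qed

lemma wc_card:
  assumes "simple_graph V E" "well_covered V E" "maximal_stable_set V E T"
  shows "card T = alpha V E"
proof -
  obtain S where S: "stable_set V E S" "card S = alpha V E" using ex_max_stable[OF assms(1)] by blast
  have m: "maximal_stable_set V E S" using max_card_maximal[OF assms(1) S] .
  have w: "\<forall>S T. maximal_stable_set V E S \<and> maximal_stable_set V E T \<longrightarrow> card S = card T"
    using assms(2) unfolding well_covered_def .
  have "card S = card T" using w[rule_format, OF conjI[OF m assms(3)]] .
  thus ?thesis using S(2) by simp
qed



definition NB :: "'a set \<Rightarrow> 'a set set \<Rightarrow> 'a set \<Rightarrow> 'a set" where
  "NB V E A = \<Union>(nbhd V E ` A)"

lemma NB_iff: "c \<in> NB V E A \<longleftrightarrow> c \<in> V \<and> (\<exists>a\<in>A. adj E a c)"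
  by (auto simp: NB_def nbhd_def)

lemma NB_I1: "c \<in> V \<Longrightarrow> a \<in> A \<Longrightarrow> adj E a c \<Longrightarrow> c \<in> NB V E A"
  by (auto simp: NB_iff)

lemma NB_I2: "c \<in> V \<Longrightarrow> a \<in> A \<Longrightarrow> adj E c a \<Longrightarrow> c \<in> NB V E A"
  using adj_sym[of E c a] by (auto simp: NB_iff)

lemma adj_symI: "adj E u v \<Longrightarrow> adj E v u"
  by (simp add: adj_def insert_commute)

lemma NB_sub: "NB V E A \<subseteq> V"
  by (auto simp: NB_iff)

lemma hall_cond:
  assumes sg: "simple_graph V E" and vwc: "very_well_covered V E"
    and S0: "stable_set V E S0" "card S0 = alpha V E"
  shows "\<forall>A\<subseteq>S0. card A \<le> card (NB V E A)"
proof (rule ccontr)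
  assume "\<not> (\<forall>A\<subseteq>S0. card A \<le> card (NB V E A))"
  then obtain A0 where A0: "A0 \<subseteq> S0" "card (NB V E A0) < card A0" by (auto simp: not_le)
  have finV: "finite V" using sg by (rule sg_finite)
  have S0V: "S0 \<subseteq> V" using S0(1) by (simp add: stable_set_def)
  have finS0: "finite S0" using S0V finV by (rule finite_subset)
  have finNB: "\<And>X. finite (NB V E X)" using NB_sub finV by (rule finite_subset)
  define F where "F = {A. A \<subseteq> S0 \<and> card (NB V E A) < card A}"
  have "F \<subseteq> Pow S0" unfolding F_def by blast
  hence finF: "finite F" using finS0 by (simp add: finite_subset)
  have "A0 \<in> F" using A0 unfolding F_def by blast
  hence neF: "F \<noteq> {}" by blast
  from finite_has_minimal[OF finF neF] obtain A where
    A: "A \<in> F" "\<forall>B\<in>F. B \<le> A \<longrightarrow> A = B" ..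
  have AS0: "A \<subseteq> S0" and Alt: "card (NB V E A) < card A" using A(1) unfolding F_def by blast+
  have AV: "A \<subseteq> V" using AS0 S0V by blast
  have finA: "finite A" using AS0 finS0 by (rule finite_subset)
  have key: "card I < card (A \<inter> NB V E I)" if I: "I \<noteq> {}" "I \<subseteq> NB V E A" for I
  proof (rule ccontr)
    assume nl: "\<not> card I < card (A \<inter> NB V E I)"
    define A' where "A' = A - NB V E I"
    have sub1: "NB V E A' \<subseteq> NB V E A - I"
    proof
      fix c assume "c \<in> NB V E A'"
      then obtain a where ca: "c \<in> V" "a \<in> A'" "adj E a c" by (auto simp: NB_iff)
      have "c \<in> NB V E A" using ca A'_def by (auto simp: NB_iff)
      moreover have "c \<notin> I"
      proof
        assume "c \<in> I"
        moreover have "a \<in> V" using ca(2) AV A'_def by blast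
        ultimately have "a \<in> NB V E I" using ca(3) by (intro NB_I2)
        thus False using ca(2) A'_def by blast
      qed
      ultimately show "c \<in> NB V E A - I" by blast
    qed
    have finI: "finite I" using I(2) finNB by (rule finite_subset)
    have "card (NB V E A') \<le> card (NB V E A - I)" using sub1 finNB by (intro card_mono) auto
    also have "\<dots> = card (NB V E A) - card I" using finI I(2) by (rule card_Diff_subset)
    finally have c1: "card (NB V E A') \<le> card (NB V E A) - card I" .
    have c2: "card A' = card A - card (A \<inter> NB V E I)"
      unfolding A'_def using finA by (intro card_Diff_subset_Int) auto
    have c3: "card I \<le> card (NB V E A)" using I(2) finNB by (intro card_mono) auto
    have c4: "card (A \<inter> NB V E I) \<le> card I" using nl by simp
    have lt: "card (NB V E A') < card A'" using c1 c2 c3 c4 Alt by linarith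
    have "A' \<subseteq> S0" using AS0 A'_def by blast
    hence "A' \<in> F" using lt unfolding F_def by blast
    moreover have "A' \<le> A" unfolding A'_def by blast
    ultimately have "A = A'" using A(2) by simp
    moreover obtain i where i: "i \<in> I" using I(1) by blast
    have "i \<in> NB V E A" using i I(2) by blast
    then obtain a where a: "a \<in> A" "adj E a i" by (auto simp: NB_iff)
    have "a \<in> V" using a(1) AV by blast
    hence "a \<in> NB V E I" using a i by (intro NB_I2)
    hence "a \<notin> A'" unfolding A'_def by blast
    ultimately show False using a(1) by simp
  qed
  have "A \<noteq> {}" using Alt by auto
  then obtain a where a: "a \<in> A" by blast
  have "nbhd V E a \<noteq> {}" using vwc a AV unfolding very_well_covered_def by blast
  then obtain c where "c \<in> nbhd V E a" by blast
  hence cNA: "c \<in> NB V E A" using a unfolding NB_def by blast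
  define G where "G = {I. stable_set V E I \<and> I \<subseteq> NB V E A}"
  have "G \<subseteq> {S. stable_set V E S}" unfolding G_def by blast
  hence finG: "finite G" using stable_fin[OF sg] by (rule finite_subset)
  have "{} \<in> G" unfolding G_def by (simp add: stable_set_def)
  hence neG: "G \<noteq> {}" by blast
  from finite_has_maximal[OF finG neG] obtain I where
    I: "I \<in> G" "\<forall>B\<in>G. I \<le> B \<longrightarrow> I = B" ..
  have stI: "stable_set V E I" and INA: "I \<subseteq> NB V E A" using I(1) unfolding G_def by blast+
  have dom: "\<exists>i\<in>I. adj E c' i" if c': "c' \<in> NB V E A" "c' \<notin> I" for c'
  proof (rule ccontr)
    assume nadj: "\<not> (\<exists>i\<in>I. adj E c' i)"
    have c'V: "c' \<in> V" using c'(1) NB_sub[of V E A] by (rule subsetD[rotated])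
    have "stable_set V E (insert c' I)"
      unfolding stable_set_def
    proof (intro conjI ballI)
      have "I \<subseteq> V" using stI unfolding stable_set_def by blast
      thus "insert c' I \<subseteq> V" using c'V by blast
      fix u v assume uv: "u \<in> insert c' I" "v \<in> insert c' I"
      show "\<not> adj E u v"
      proof
        assume ad: "adj E u v"
        have uv': "u \<noteq> v" using adjD[OF sg ad] by simp
        from uv have "u = c' \<or> u \<in> I" "v = c' \<or> v \<in> I" by auto
        thus False
        proof (elim disjE)
          assume "u = c'" "v = c'" thus False using uv' by simp
        next
          assume "u = c'" "v \<in> I" thus False using nadj ad by blast
        next
          assume h: "u \<in> I" "v = c'"
          have "adj E v u" using ad by (rule adj_symI)
          hence "adj E c' u" using h(2) by simp
          thus False using nadj h by blast
        next
          assume "u \<in> I" "v \<in> I" thus False using stI ad unfolding stable_set_def by blast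
        qed
      qed
    qed
    hence "insert c' I \<in> G" using c' INA unfolding G_def by blast
    moreover have "I \<le> insert c' I" by blast
    ultimately have "I = insert c' I" using I(2) by simp
    thus False using c'(2) by blast
  qed
  have Ine: "I \<noteq> {}"
  proof
    assume I0: "I = {}"
    hence "c \<notin> I" by simp
    from dom[OF cNA this] show False using I0 by simp
  qed
  have IV: "I \<subseteq> V" using stI by (simp add: stable_set_def)
  define T0 where "T0 = I \<union> (S0 - NB V E I)"
  have stT0: "stable_set V E T0"
    unfolding stable_set_def
  proof (intro conjI ballI)
    show "T0 \<subseteq> V" unfolding T0_def using IV S0V by blast
    fix u v assume uv: "u \<in> T0" "v \<in> T0"
    show "\<not> adj E u v"
    proof
      assume ad: "adj E u v"
      consider "u \<in> I" "v \<in> I" | "u \<in> I" "v \<in> S0 - NB V E I" | "v \<in> I" "u \<in> S0 - NB V E I"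
        | "u \<in> S0" "v \<in> S0" using uv unfolding T0_def by blast
      thus False
      proof cases
        case 1 thus False using stI ad by (auto simp: stable_set_def)
      next
        case 2
        hence "v \<in> NB V E I" using ad S0V by (auto simp: NB_iff)
        thus False using 2 by blast
      next
        case 3
        hence "u \<in> NB V E I" using ad S0V by (intro NB_I2) auto
        thus False using 3 by blast
      next
        case 4 thus False using S0(1) ad by (auto simp: stable_set_def)
      qed
    qed
  qed
  obtain T where T: "maximal_stable_set V E T" "T0 \<subseteq> T" using ex_maximal[OF sg stT0] by blast
  have wc: "well_covered V E" using vwc by (simp add: very_well_covered_def)
  have cT: "card T = card S0" using wc_card[OF sg wc T(1)] S0(2) by simp
  have stT: "stable_set V E T" using T(1) by (simp add: maximal_stable_set_def)
  have TV: "T \<subseteq> V" using stT by (simp add: stable_set_def)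
  have notadjT: "\<not> adj E u v" if "u \<in> T" "v \<in> T" for u v
    using stT that by (auto simp: stable_set_def)
  have IT: "I \<subseteq> T" using T(2) unfolding T0_def by blast
  have S0T: "S0 - NB V E I \<subseteq> T" using T(2) unfolding T0_def by blast
  define J where "J = T - I - S0"
  have Tsub: "T \<subseteq> I \<union> (S0 - NB V E I) \<union> J"
  proof
    fix t assume t: "t \<in> T"
    show "t \<in> I \<union> (S0 - NB V E I) \<union> J"
    proof (cases "t \<in> I \<or> t \<notin> S0")
      case True thus ?thesis using t unfolding J_def by blast
    next
      case False
      have "t \<notin> NB V E I"
      proof
        assume "t \<in> NB V E I"
        then obtain i where "i \<in> I" "adj E i t" by (auto simp: NB_iff)
        thus False using notadjT IT t by blast
      qed
      thus ?thesis using False by blast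
    qed
  qed
  have finJ: "finite J" using TV finV unfolding J_def by (auto intro: finite_subset)
  have finI: "finite I" using IV finV by (rule finite_subset)
  have cardT_le: "card T \<le> card I + card (S0 - NB V E I) + card J"
  proof -
    have "card T \<le> card (I \<union> (S0 - NB V E I) \<union> J)"
      using Tsub finI finS0 finJ by (intro card_mono) auto
    also have "\<dots> \<le> card (I \<union> (S0 - NB V E I)) + card J" by (rule card_Un_le)
    also have "card (I \<union> (S0 - NB V E I)) \<le> card I + card (S0 - NB V E I)" by (rule card_Un_le)
    finally show ?thesis by simp
  qed
  have JNA: "j \<notin> NB V E A" if "j \<in> J" for j
  proof
    assume "j \<in> NB V E A"
    moreover have "j \<notin> I" using that unfolding J_def by blast
    ultimately obtain i where "i \<in> I" "adj E j i" using dom by blast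
    thus False using notadjT IT that unfolding J_def by blast
  qed
  have JT: "J \<subseteq> T" unfolding J_def by blast
  have JS0: "J \<inter> S0 = {}" unfolding J_def by blast
  define K where "K = S0 \<inter> NB V E J"
  have cJK: "card J \<le> card K"
  proof -
    define X where "X = (S0 - NB V E J) \<union> J"
    have stX: "stable_set V E X"
      unfolding stable_set_def
    proof (intro conjI ballI)
      show "X \<subseteq> V" unfolding X_def using S0V JT TV by blast
      fix u v assume uv: "u \<in> X" "v \<in> X"
      show "\<not> adj E u v"
      proof
        assume ad: "adj E u v"
        consider "u \<in> S0" "v \<in> S0" | "u \<in> J" "v \<in> J" | "u \<in> S0 - NB V E J" "v \<in> J"
          | "v \<in> S0 - NB V E J" "u \<in> J" using uv unfolding X_def by blast
        thus False
        proof cases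
          case 1 thus False using S0(1) ad by (auto simp: stable_set_def)
        next
          case 2 thus False using notadjT JT ad by blast
        next
          case 3
          hence "u \<in> NB V E J" using ad S0V by (intro NB_I2) auto
          thus False using 3 by blast
        next
          case 4
          hence "v \<in> NB V E J" using ad S0V by (auto simp: NB_iff)
          thus False using 4 by blast
        qed
      qed
    qed
    have "card X \<le> card S0" using stable_le_alpha[OF sg stX] S0(2) by simp
    moreover have "card X = card (S0 - NB V E J) + card J"
      unfolding X_def using finS0 finJ JS0 by (intro card_Un_disjoint) auto
    moreover have "card (S0 - NB V E J) = card S0 - card K"
      unfolding K_def using finS0 by (intro card_Diff_subset_Int) auto
    moreover have "card K \<le> card S0" unfolding K_def using finS0 by (intro card_mono) auto
    ultimately show ?thesis by linarith
  qed
  define Q where "Q = S0 \<inter> NB V E I"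
  define AI where "AI = A \<inter> NB V E I"
  have KQ: "K \<subseteq> Q - AI"
  proof
    fix s assume s: "s \<in> K"
    then obtain j where j: "s \<in> S0" "j \<in> J" "adj E j s" unfolding K_def by (auto simp: NB_iff)
    have "s \<in> NB V E I"
    proof (rule ccontr)
      assume "s \<notin> NB V E I"
      hence "s \<in> T" using S0T j(1) by blast
      thus False using notadjT j JT by blast
    qed
    moreover have "s \<notin> A"
    proof
      assume "s \<in> A"
      moreover have "j \<in> V" using j(2) JT TV by blast
      ultimately have "j \<in> NB V E A" using j(3) by (intro NB_I2)
      thus False using JNA j(2) by blast
    qed
    ultimately show "s \<in> Q - AI" unfolding Q_def AI_def using j(1) by blast
  qed
  have finQ: "finite Q" unfolding Q_def using finS0 by blast
  have AIQ: "AI \<subseteq> Q" unfolding AI_def Q_def using AS0 by blast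
  have "card K \<le> card (Q - AI)" using KQ finQ by (intro card_mono) auto
  also have "\<dots> = card Q - card AI" using finite_subset[OF AIQ finQ] AIQ by (rule card_Diff_subset)
  finally have cK: "card K \<le> card Q - card AI" .
  have cAIQ: "card AI \<le> card Q" using AIQ finQ by (rule card_mono[rotated])
  have cS0I: "card (S0 - NB V E I) = card S0 - card Q"
    unfolding Q_def using finS0 by (intro card_Diff_subset_Int) auto
  have cQS: "card Q \<le> card S0" unfolding Q_def using finS0 by (intro card_mono) auto
  have kI: "card I < card AI" unfolding AI_def using key[OF Ine INA] .
  show False using cardT_le cT cS0I cK cAIQ cQS kI cJK by linarith
qed



lemma partner:
  assumes sg: "simple_graph V E" and vwc: "very_well_covered V E"
  shows "\<exists>p. (\<forall>x\<in>V. p x \<in> V \<and> adj E x (p x) \<and> p (p x) = x) \<and>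
             (\<forall>T x. maximal_stable_set V E T \<longrightarrow> x \<in> V \<longrightarrow> x \<notin> T \<longrightarrow> p x \<in> T)"
proof -
  obtain S0 where S0: "stable_set V E S0" "card S0 = alpha V E" using ex_max_stable[OF sg] by blast
  have finV: "finite V" using sg by (rule sg_finite)
  have S0V: "S0 \<subseteq> V" using S0(1) by (simp add: stable_set_def)
  have finS0: "finite S0" using S0V finV by (rule finite_subset)
  have hc: "\<forall>A\<subseteq>S0. card A \<le> card (\<Union>(nbhd V E ` A))"
    using hall_cond[OF sg vwc S0] unfolding NB_def .
  have fn: "\<forall>a\<in>S0. finite (nbhd V E a)"
    using finV by (auto simp: nbhd_def)
  obtain f where f: "inj_on f S0" "\<forall>a\<in>S0. f a \<in> nbhd V E a"
    using hall[OF finS0 fn hc] by blast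
  have fV: "f a \<in> V" and fadj: "adj E a (f a)" if "a \<in> S0" for a
    using f(2) that by (auto simp: nbhd_def)
  define C where "C = V - S0"
  have fC: "f ` S0 \<subseteq> C"
  proof
    fix y assume "y \<in> f ` S0"
    then obtain a where a: "a \<in> S0" "y = f a" by blast
    have "f a \<notin> S0"
    proof
      assume "f a \<in> S0"
      thus False using S0(1) a(1) fadj[OF a(1)] by (auto simp: stable_set_def)
    qed
    thus "y \<in> C" using fV[OF a(1)] a(2) unfolding C_def by simp
  qed
  have cV: "card V = 2 * alpha V E" using vwc by (simp add: very_well_covered_def)
  have cC: "card C = alpha V E" unfolding C_def using card_Diff_subset[OF finS0 S0V] cV S0(2) by simp
  have cfS: "card (f ` S0) = card C" using card_image[OF f(1)] S0(2) cC by simp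
  have finC: "finite C" unfolding C_def using finV by simp
  have fS0C: "f ` S0 = C" using card_subset_eq[OF finC fC cfS] .
  define p where "p x = (if x \<in> S0 then f x else inv_into S0 f x)" for x
  have pS: "p x = f x" if "x \<in> S0" for x using that p_def by simp
  have pC: "p x \<in> S0" "f (p x) = x" if "x \<in> V" "x \<notin> S0" for x
  proof -
    have "x \<in> f ` S0" using that fS0C C_def by simp
    thus "p x \<in> S0" "f (p x) = x" using that p_def by (auto intro: inv_into_into f_inv_into_f)
  qed
  have P1: "p x \<in> V \<and> adj E x (p x) \<and> p (p x) = x" if x: "x \<in> V" for x
  proof (cases "x \<in> S0")
    case True
    have "f x \<in> C" using fC True by blast
    hence "f x \<notin> S0" unfolding C_def by simp
    hence "p (f x) = inv_into S0 f (f x)" using p_def by simp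
    also have "\<dots> = x" using inv_into_f_f[OF f(1) True] .
    finally show ?thesis using True pS fV fadj by simp
  next
    case False
    have y: "p x \<in> S0" "f (p x) = x" using pC[OF x False] by auto
    have "adj E (p x) x" using fadj[OF y(1)] y(2) by simp
    hence "adj E x (p x)" by (rule adj_symI)
    moreover have "p (p x) = x" using pS[OF y(1)] y(2) by simp
    moreover have "p x \<in> V" using y(1) S0V by auto
    ultimately show ?thesis by simp
  qed
  have P2: "p x \<in> T" if T: "maximal_stable_set V E T" and x: "x \<in> V" "x \<notin> T" for T x
  proof (rule ccontr)
    assume px: "p x \<notin> T"
    define r where "r t = (if t \<in> S0 then t else p t)" for t
    have rS0: "r t \<in> S0" if "t \<in> V" for t using pC[OF that] r_def by (cases "t \<in> S0") auto
    have stT: "stable_set V E T" using T by (simp add: maximal_stable_set_def)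
    have TV: "T \<subseteq> V" using stT by (simp add: stable_set_def)
    have na: "\<not> adj E u v" if "u \<in> T" "v \<in> T" for u v using stT that by (auto simp: stable_set_def)
    have pp: "p (p t) = t" if "t \<in> V" for t using P1[OF that] by simp
    have same: "t = y \<or> t = p y" if ty: "t \<in> V" "y \<in> V" "r t = r y" for t y
    proof (cases "t \<in> S0"; cases "y \<in> S0")
      assume "t \<in> S0" "y \<in> S0" thus ?thesis using ty r_def by simp
    next
      assume "t \<in> S0" "y \<notin> S0" thus ?thesis using ty r_def by simp
    next
      assume h: "t \<notin> S0" "y \<in> S0"
      hence "p t = y" using ty r_def by simp
      hence "p (p t) = p y" by simp
      thus ?thesis using pp[OF ty(1)] by simp
    next
      assume h: "t \<notin> S0" "y \<notin> S0"
      hence "p t = p y" using ty r_def by simp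
      hence "p (p t) = p (p y)" by simp
      thus ?thesis using pp[OF ty(1)] pp[OF ty(2)] by simp
    qed
    have inj: "inj_on r T"
    proof (rule inj_onI)
      fix t1 t2 assume t: "t1 \<in> T" "t2 \<in> T" "r t1 = r t2"
      have t12V: "t1 \<in> V" "t2 \<in> V" using t(1,2) TV by auto
      have "t1 = t2 \<or> t1 = p t2" using same[OF t12V t(3)] .
      moreover have "t1 \<noteq> p t2"
      proof
        assume "t1 = p t2"
        moreover have "adj E t2 (p t2)" using P1[OF t12V(2)] by simp
        ultimately have "adj E t2 t1" by simp
        thus False using na t by blast
      qed
      ultimately show "t1 = t2" by simp
    qed
    have img: "r ` T \<subseteq> S0 - {r x}"
    proof
      fix z assume "z \<in> r ` T"
      then obtain t where t: "t \<in> T" "z = r t" by blast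
      have "r t \<noteq> r x"
      proof
        assume "r t = r x"
        moreover have "t \<in> V" using t(1) TV by auto
        ultimately have "t = x \<or> t = p x" using same x(1) by simp
        thus False using t(1) x(2) px by auto
      qed
      moreover have "t \<in> V" using t(1) TV by auto
    ultimately show "z \<in> S0 - {r x}" using rS0 t(2) by simp
    qed
    have "card T \<le> card (S0 - {r x})" using card_inj_on_le[OF inj img] finS0 by simp
    moreover have "card (S0 - {r x}) = card S0 - 1" using rS0[OF x(1)] finS0 by simp
    moreover have "card S0 > 0" using rS0[OF x(1)] finS0 card_gt_0_iff by blast
    moreover have "card T = card S0"
      using wc_card[OF sg _ T] vwc S0(2) by (simp add: very_well_covered_def)
    ultimately show False by linarith
  qed
  have "(\<forall>x\<in>V. p x \<in> V \<and> adj E x (p x) \<and> p (p x) = x) \<and>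
             (\<forall>T x. maximal_stable_set V E T \<longrightarrow> x \<in> V \<longrightarrow> x \<notin> T \<longrightarrow> p x \<in> T)"
    using P1 P2 by simp
  thus ?thesis by (rule exI[where x=p])
qed



theorem theorem7:
  fixes V :: "'a set" and E :: "'a set set" and S :: "'a set"
  assumes "simple_graph V E"
    and "very_well_covered V E"
    and "S \<in> Psi V E"
  shows "koenig_egervary (closed_nbhd_set V E S)
           (induced_edges E (closed_nbhd_set V E S))"
proof -
  have sg: "simple_graph V E" by fact
  have lms: "local_max_stable V E S" using assms(3) by (simp add: Psi_def)
  define NS where "NS = closed_nbhd_set V E S"
  define EH where "EH = induced_edges E NS"
  define ON where "ON = open_nbhd_set V E S"
  have SV: "S \<subseteq> V" using lms by (simp add: local_max_stable_def)
  have ms: "max_stable_set NS EH S" using lms by (simp add: local_max_stable_def NS_def EH_def)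
  have NSdef: "NS = S \<union> ON" unfolding NS_def ON_def closed_nbhd_set_def by simp
  have finV: "finite V" using sg by (rule sg_finite)
  have ON_iff: "v \<in> ON \<longleftrightarrow> v \<in> V \<and> v \<notin> S \<and> (\<exists>s\<in>S. adj E v s)" for v
    unfolding ON_def open_nbhd_set_def nbhd_def using SV by blast
  have NSV: "NS \<subseteq> V" unfolding NSdef using SV ON_iff by blast
  have finNS: "finite NS" using NSV finV by (rule finite_subset)
  have finON: "finite ON" using finNS NSdef by simp
  have finS: "finite S" using finNS NSdef by simp
  have SON: "S \<inter> ON = {}" using ON_iff by blast
  have adjH: "adj EH u v \<longleftrightarrow> adj E u v \<and> u \<in> NS \<and> v \<in> NS" for u v
    unfolding EH_def adj_def induced_edges_def by simp
  have stSH: "stable_set NS EH S" using ms by (simp add: max_stable_set_def)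
  have stS: "stable_set V E S"
    unfolding stable_set_def
  proof (intro conjI ballI)
    show "S \<subseteq> V" by fact
    fix u v assume uv: "u \<in> S" "v \<in> S"
    show "\<not> adj E u v"
    proof
      assume "adj E u v"
      hence "adj EH u v" using uv adjH NSdef by simp
      thus False using stSH uv by (auto simp: stable_set_def)
    qed
  qed
  have naS: "\<not> adj E u v" if "u \<in> S" "v \<in> S" for u v using stS that by (auto simp: stable_set_def)
  have maxH: "card Z \<le> card S" if "stable_set NS EH Z" for Z
    using ms that by (simp add: max_stable_set_def)
  obtain p where P1: "\<And>x. x \<in> V \<Longrightarrow> p x \<in> V \<and> adj E x (p x) \<and> p (p x) = x"
    and P2: "\<And>T x. maximal_stable_set V E T \<Longrightarrow> x \<in> V \<Longrightarrow> x \<notin> T \<Longrightarrow> p x \<in> T"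
    using partner[OF sg assms(2)] by blast
  have injp: "inj_on p V"
  proof (rule inj_onI)
    fix x y assume "x \<in> V" "y \<in> V" "p x = p y"
    hence "p (p x) = p (p y)" by simp
    thus "x = y" using P1 \<open>x \<in> V\<close> \<open>y \<in> V\<close> by simp
  qed
  have pS: "p s \<in> ON" if s: "s \<in> S" for s
  proof -
    have sV: "s \<in> V" using s SV by blast
    have a: "adj E s (p s)" and pV: "p s \<in> V" using P1[OF sV] by simp_all
    have "p s \<notin> S" using naS[OF s] a by blast
    moreover have "adj E (p s) s" using a by (rule adj_symI)
    ultimately show ?thesis using pV s ON_iff by blast
  qed
  have pON: "p v \<in> S" if v: "v \<in> ON" for v
  proof (rule ccontr)
    assume pv: "p v \<notin> S"
    have vV: "v \<in> V" and vS: "v \<notin> S" using v ON_iff by auto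
    define Nv where "Nv = {s\<in>S. adj E v s}"
    define Y where "Y = insert v (S - Nv)"
    have stY: "stable_set V E Y"
      unfolding stable_set_def
    proof (intro conjI ballI)
      show "Y \<subseteq> V" unfolding Y_def using vV SV by blast
      fix a b assume ab: "a \<in> Y" "b \<in> Y"
      show "\<not> adj E a b"
      proof
        assume ad: "adj E a b"
        have abn: "a \<noteq> b" using adjD[OF sg ad] by simp
        from ab have "a = v \<or> a \<in> S - Nv" "b = v \<or> b \<in> S - Nv" unfolding Y_def by auto
        thus False
        proof (elim disjE)
          assume "a = v" "b = v" thus False using abn by simp
        next
          assume "a = v" "b \<in> S - Nv" thus False using ad unfolding Nv_def by auto
        next
          assume h: "a \<in> S - Nv" "b = v"
          have "adj E b a" using ad by (rule adj_symI)
          thus False using h unfolding Nv_def by auto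
        next
          assume "a \<in> S - Nv" "b \<in> S - Nv" thus False using naS ad by auto
        qed
      qed
    qed
    obtain T where T: "maximal_stable_set V E T" "Y \<subseteq> T" using ex_maximal[OF sg stY] by blast
    have stT: "stable_set V E T" using T(1) by (simp add: maximal_stable_set_def)
    have naT: "\<not> adj E a b" if "a \<in> T" "b \<in> T" for a b using stT that by (auto simp: stable_set_def)
    define Z where "Z = T \<inter> NS"
    have stZ: "stable_set NS EH Z"
      unfolding stable_set_def
    proof (intro conjI ballI)
      show "Z \<subseteq> NS" unfolding Z_def by blast
      fix a b assume "a \<in> Z" "b \<in> Z"
      thus "\<not> adj EH a b" using naT adjH unfolding Z_def by auto
    qed
    have vT: "v \<in> T" using T(2) Y_def by auto
    have NvS: "Nv \<subseteq> S" unfolding Nv_def by blast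
    have pNv: "p s \<in> T" if s: "s \<in> Nv" for s
    proof -
      have "adj E v s" using s Nv_def by simp
      hence "s \<notin> T" using naT vT by blast
      moreover have "s \<in> V" using s NvS SV by blast
      ultimately show ?thesis using P2[OF T(1)] by blast
    qed
    define W where "W = insert v ((S - Nv) \<union> p ` Nv)"
    have WZ: "W \<subseteq> Z"
    proof
      fix w assume "w \<in> W"
      hence "w = v \<or> w \<in> S - Nv \<or> w \<in> p ` Nv" unfolding W_def by blast
      thus "w \<in> Z"
      proof (elim disjE)
        assume "w = v" thus ?thesis using vT v NSdef Z_def by simp
      next
        assume "w \<in> S - Nv" thus ?thesis using T(2) Y_def NSdef Z_def by auto
      next
        assume "w \<in> p ` Nv"
        then obtain s where s: "s \<in> Nv" "w = p s" by blast
        have "p s \<in> ON" using pS s NvS by blast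
        thus ?thesis using pNv[OF s(1)] s(2) NSdef Z_def by simp
      qed
    qed
    have finZ: "finite Z" using finNS Z_def by simp
    have finNv: "finite Nv" using NvS finS by (rule finite_subset)
    have vnot: "v \<notin> (S - Nv) \<union> p ` Nv"
    proof
      assume "v \<in> (S - Nv) \<union> p ` Nv"
      moreover have "v \<notin> S - Nv" using vS by blast
      ultimately obtain s where s: "s \<in> Nv" "v = p s" by blast
      have "s \<in> V" using s(1) NvS SV by blast
      hence "p v = s" using P1 s(2) by simp
      thus False using pv s(1) NvS by blast
    qed
    have disj: "(S - Nv) \<inter> p ` Nv = {}"
    proof -
      have "p ` Nv \<subseteq> ON" using pS NvS by blast
      thus ?thesis using SON by blast
    qed
    have injNv: "inj_on p Nv" using injp NvS SV by (blast intro: inj_on_subset)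
    have "card W = Suc (card ((S - Nv) \<union> p ` Nv))"
      unfolding W_def using vnot finS finNv by (simp)
    also have "card ((S - Nv) \<union> p ` Nv) = card (S - Nv) + card (p ` Nv)"
      using disj finS finNv by (intro card_Un_disjoint) auto
    also have "card (p ` Nv) = card Nv" using injNv by (rule card_image)
    also have "card (S - Nv) = card S - card Nv" using finNv NvS by (rule card_Diff_subset)
    finally have cW: "card W = Suc (card S - card Nv + card Nv)" .
    have "card Nv \<le> card S" using NvS finS by (rule card_mono[rotated])
    hence "card W = Suc (card S)" using cW by simp
    moreover have "card W \<le> card Z" using WZ finZ by (rule card_mono[rotated])
    moreover have "card Z \<le> card S" using maxH[OF stZ] .
    ultimately show False by simp
  qed
  have pSON: "p ` S = ON"
  proof
    show "p ` S \<subseteq> ON" using pS by blast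
    show "ON \<subseteq> p ` S"
    proof
      fix v assume v: "v \<in> ON"
      hence "v \<in> V" using ON_iff by blast
      hence "v = p (p v)" using P1 by simp
      thus "v \<in> p ` S" using pON[OF v] by blast
    qed
  qed
  have injS: "inj_on p S" using injp SV by (blast intro: inj_on_subset)
  have cON: "card ON = card S" using card_image[OF injS] pSON by simp
  have finStH: "finite {Z. stable_set NS EH Z}"
  proof -
    have "{Z. stable_set NS EH Z} \<subseteq> Pow NS" by (auto simp: stable_set_def)
    thus ?thesis using finNS by (simp add: finite_subset)
  qed
  have alphaH: "alpha NS EH = card S"
  proof (rule antisym)
    show "alpha NS EH \<le> card S" unfolding alpha_def
      using finStH stSH maxH by (intro Max.boundedI) auto
    show "card S \<le> alpha NS EH" unfolding alpha_def
      using finStH stSH by (intro Max_ge) auto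
  qed
  have finE: "finite EH"
  proof -
    have "EH \<subseteq> Pow NS" unfolding EH_def induced_edges_def by blast
    thus ?thesis using finNS by (simp add: finite_subset)
  qed
  have finMat: "finite {M. matching EH M}"
  proof -
    have "{M. matching EH M} \<subseteq> Pow EH" by (auto simp: matching_def)
    thus ?thesis using finE by (simp add: finite_subset)
  qed
  define Mh where "Mh = (\<lambda>s. {s, p s}) ` S"
  have pSnS: "p s \<notin> S" if "s \<in> S" for s using pS[OF that] SON by blast
  have matMh: "matching EH Mh"
    unfolding matching_def
  proof (intro conjI ballI impI)
    show "Mh \<subseteq> EH"
    proof
      fix e assume "e \<in> Mh"
      then obtain s where s: "s \<in> S" "e = {s, p s}" unfolding Mh_def by blast
      have "s \<in> V" using s SV by blast
      hence "adj E s (p s)" using P1 by simp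
      hence "e \<in> E" using s(2) by (simp add: adj_def)
      moreover have "e \<subseteq> NS" using s pS NSdef by auto
      ultimately show "e \<in> EH" unfolding EH_def induced_edges_def by simp
    qed
    fix e1 e2 assume e: "e1 \<in> Mh" "e2 \<in> Mh" "e1 \<noteq> e2"
    obtain s1 where s1: "s1 \<in> S" "e1 = {s1, p s1}" using e(1) unfolding Mh_def by blast
    obtain s2 where s2: "s2 \<in> S" "e2 = {s2, p s2}" using e(2) unfolding Mh_def by blast
    have ne: "s1 \<noteq> s2" using e(3) s1 s2 by auto
    have "s1 \<noteq> p s2" using pSnS[OF s2(1)] s1(1) by auto
    moreover have "p s1 \<noteq> s2" using pSnS[OF s1(1)] s2(1) by auto
    moreover have "p s1 \<noteq> p s2" using injS s1(1) s2(1) ne by (auto dest: inj_onD)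
    ultimately show "e1 \<inter> e2 = {}" using s1(2) s2(2) ne by auto
  qed
  have cMh: "card Mh = card S"
    unfolding Mh_def
  proof (rule card_image, rule inj_onI)
    fix s1 s2 assume s: "s1 \<in> S" "s2 \<in> S" "{s1, p s1} = {s2, p s2}"
    hence "s1 \<in> {s2, p s2}" by blast
    moreover have "s1 \<noteq> p s2" using pSnS[OF s(2)] s(1) by auto
    ultimately show "s1 = s2" by simp
  qed
  have mubound: "card M \<le> card ON" if M: "matching EH M" for M
  proof -
    define g where "g e = (SOME x. x \<in> e \<and> x \<notin> S)" for e :: "'a set"
    have gprop: "g e \<in> e \<and> g e \<notin> S" if e: "e \<in> M" for e
    proof -
      have eH: "e \<in> EH" using M e by (auto simp: matching_def)
      hence eE: "e \<in> E" and eNS: "e \<subseteq> NS" unfolding EH_def induced_edges_def by auto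
      have "card e = 2" using sg eE by (auto simp: simple_graph_def)
      then obtain u w where uw: "e = {u, w}" "u \<noteq> w" by (auto simp: card_2_iff)
      have "adj EH u w" using eH uw(1) by (simp add: adj_def)
      hence "\<not> (u \<in> S \<and> w \<in> S)" using stSH by (auto simp: stable_set_def)
      hence "\<exists>x. x \<in> e \<and> x \<notin> S" using uw(1) by blast
      thus ?thesis unfolding g_def by (rule someI_ex)
    qed
    have "inj_on g M"
    proof (rule inj_onI)
      fix e1 e2 assume e: "e1 \<in> M" "e2 \<in> M" "g e1 = g e2"
      show "e1 = e2"
      proof (rule ccontr)
        assume "e1 \<noteq> e2"
        hence "e1 \<inter> e2 = {}" using M e(1,2) by (auto simp: matching_def)
        moreover have "g e1 \<in> e1" "g e2 \<in> e2" using gprop e(1,2) by auto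
        ultimately show False using e(3) by auto
      qed
    qed
    moreover have "g ` M \<subseteq> ON"
    proof
      fix x assume "x \<in> g ` M"
      then obtain e where e: "e \<in> M" "x = g e" by blast
      have "e \<in> EH" using M e(1) by (auto simp: matching_def)
      hence "e \<subseteq> NS" unfolding EH_def induced_edges_def by auto
      thus "x \<in> ON" using gprop[OF e(1)] e(2) NSdef by auto
    qed
    ultimately show ?thesis using finON by (rule card_inj_on_le)
  qed
  have muH: "mu EH = card ON"
  proof (rule antisym)
    show "mu EH \<le> card ON" unfolding mu_def
      using finMat matMh mubound by (intro Max.boundedI) auto
    have "card Mh \<in> card ` {M. matching EH M}" using matMh by blast
    hence "card Mh \<le> Max (card ` {M. matching EH M})" using finMat by (intro Max_ge) auto
    thus "card ON \<le> mu EH" unfolding mu_def using cMh cON by simp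
  qed
  have cNS: "card NS = card S + card ON"
    unfolding NSdef using finS finON SON by (rule card_Un_disjoint)
  show ?thesis
    unfolding koenig_egervary_def NS_def[symmetric] EH_def[symmetric]
    using alphaH muH cNS by simp
qed


end
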